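(* Let $(V_1, V_2)$ be an isometric pair on $\mathcal{H}$ and let $\mathcal{W} = \ker (V_1V_2)^*$, $\mathcal{W}_i = \ker V_i^*$ ($i=1,2$). Suppose $(\ker C(V_1, V_2))^\perp = \mathcal{W}$. Then $\dim \mathcal{W}_1 = \dim \mathcal{W}_2$. In particular, if $\mathcal{W}$ is finite-dimensional, then $\dim \mathcal{W}$ is even.
   Context: All Hilbert spaces are complex and separable. An isometric pair is a pair $(V_1,V_2)$ of commuting isometries. $C(V_1,V_2) := I - V_1V_1^* - V_2V_2^* + V_1V_2V_1^*V_2^*$. *)

theory Defs
  imports "HOL-Analysis.Analysis"
begin

class complex_vector = real_vector +
  fixes scaleC :: "complex \<Rightarrow> 'a \<Rightarrow> 'a" (infixr \<open>*\<^sub>C\<close> 75)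
  assumes scaleC_add_right: "a *\<^sub>C (x + y) = a *\<^sub>C x + a *\<^sub>C y"
    and scaleC_add_left: "(a + b) *\<^sub>C x = a *\<^sub>C x + b *\<^sub>C x"
    and scaleC_scaleC: "a *\<^sub>C (b *\<^sub>C x) = (a * b) *\<^sub>C x"
    and scaleC_one: "1 *\<^sub>C x = x"
    and scaleR_scaleC: "scaleR r x = complex_of_real r *\<^sub>C x"

text \<open>Inner product, linear in the first and conjugate-linear in the second argument.\<close>
class complex_inner = complex_vector + real_normed_vector +
  fixes cinner :: "'a \<Rightarrow> 'a \<Rightarrow> complex"
  assumes cinner_commute: "cinner x y = cnj (cinner y x)"
    and cinner_add_left: "cinner (x + y) z = cinner x z + cinner y z"
    and cinner_scaleC_left: "cinner (a *\<^sub>C x) y = a * cinner x y"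
    and cinner_self_real: "Im (cinner x x) = 0"
    and cinner_self_nonneg: "0 \<le> Re (cinner x x)"
    and cinner_self_eq_zero: "cinner x x = 0 \<longleftrightarrow> x = 0"
    and norm_eq_sqrt_cinner: "norm x = sqrt (Re (cinner x x))"

text \<open>A (complex) Hilbert space is a type of sort {complex_inner, complete_space}.\<close>

definition separable_space :: "'a::topological_space itself \<Rightarrow> bool" where
  "separable_space _ \<longleftrightarrow> (\<exists>D::'a set. countable D \<and> closure D = UNIV)"

definition clinear :: "('a::complex_vector \<Rightarrow> 'b::complex_vector) \<Rightarrow> bool" where
  "clinear f \<longleftrightarrow> (\<forall>x y. f (x + y) = f x + f y) \<and> (\<forall>c x. f (c *\<^sub>C x) = c *\<^sub>C f x)"

definition bounded_clinear :: "('a::complex_inner \<Rightarrow> 'b::complex_inner) \<Rightarrow> bool" where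
  "bounded_clinear f \<longleftrightarrow> clinear f \<and> (\<exists>K. \<forall>x. norm (f x) \<le> norm x * K)"

definition is_adjoint :: "('a::complex_inner \<Rightarrow> 'a) \<Rightarrow> ('a \<Rightarrow> 'a) \<Rightarrow> bool" where
  "is_adjoint T Ts \<longleftrightarrow> (\<forall>x y. cinner (T x) y = cinner x (Ts y))"

definition isometry :: "('a::complex_inner \<Rightarrow> 'a) \<Rightarrow> bool" where
  "isometry V \<longleftrightarrow> bounded_clinear V \<and> (\<forall>x. norm (V x) = norm x)"

definition ker :: "('a \<Rightarrow> 'b::zero) \<Rightarrow> 'a set" where
  "ker T = {x. T x = 0}"

definition orth_compl :: "'a::complex_inner set \<Rightarrow> 'a set" where
  "orth_compl S = {y. \<forall>x\<in>S. cinner x y = 0}"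

definition defect_op ::
  "('a::complex_inner \<Rightarrow> 'a) \<Rightarrow> ('a \<Rightarrow> 'a) \<Rightarrow> ('a \<Rightarrow> 'a) \<Rightarrow> ('a \<Rightarrow> 'a) \<Rightarrow> 'a \<Rightarrow> 'a" where
  "defect_op V1 V1s V2 V2s x = x - V1 (V1s x) - V2 (V2s x) + V1 (V2 (V1s (V2s x)))"

definition cspan :: "'a::complex_vector set \<Rightarrow> 'a set" where
  "cspan B = {(\<Sum>b\<in>F. c b *\<^sub>C b) | F c. finite F \<and> F \<subseteq> B}"

definition is_onb :: "'a::complex_inner set \<Rightarrow> 'a set \<Rightarrow> bool" where
  "is_onb S B \<longleftrightarrow> B \<subseteq> S \<and> (\<forall>x\<in>B. cinner x x = 1)
      \<and> (\<forall>x\<in>B. \<forall>y\<in>B. x \<noteq> y \<longrightarrow> cinner x y = 0)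
      \<and> closure (cspan B) = S"

definition same_hilbert_dim :: "'a::complex_inner set \<Rightarrow> 'a set \<Rightarrow> bool" where
  "same_hilbert_dim S T \<longleftrightarrow> (\<exists>B1 B2. is_onb S B1 \<and> is_onb T B2 \<and> (\<exists>f. bij_betw f B1 B2))"

text \<open>Finite-dimensional: has a finite orthonormal basis; its dimension is its cardinality.\<close>
definition finite_dim :: "'a::complex_inner set \<Rightarrow> bool" where
  "finite_dim S \<longleftrightarrow> (\<exists>B. is_onb S B \<and> finite B)"

end

theory Submission imports Defs begin

interpretation cvs: vector_space "scaleC :: complex \<Rightarrow> 'a \<Rightarrow> 'a::complex_vector"
  by unfold_locales (simp_all add: scaleC_add_right scaleC_add_left scaleC_scaleC scaleC_one)

lemma cinner_add_right: "cinner x (y + z) = cinner x y + cinner (x::'a::complex_inner) z"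
  by (metis cinner_commute cinner_add_left complex_cnj_add)

lemma cinner_scaleC_right: "cinner x (a *\<^sub>C y) = cnj a * cinner (x::'a::complex_inner) y"
  by (metis cinner_commute cinner_scaleC_left complex_cnj_mult)

lemma cinner_zero_left[simp]: "cinner 0 (y::'a::complex_inner) = 0"
  by (metis add_cancel_right_left cinner_add_left add_0)

lemma cinner_zero_right[simp]: "cinner (y::'a::complex_inner) 0 = 0"
  by (metis cinner_commute cinner_zero_left complex_cnj_zero)

lemma cinner_minus_left: "cinner (- x) (y::'a::complex_inner) = - cinner x y"
  by (metis add_eq_0_iff cinner_add_left cinner_zero_left)

lemma cinner_minus_right: "cinner y (- x::'a::complex_inner) = - cinner y x"
  by (metis add_eq_0_iff cinner_add_right cinner_zero_right)

lemma cinner_diff_left: "cinner (x - z) (y::'a::complex_inner) = cinner x y - cinner z y"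
  using cinner_add_left[of x "- z" y] by (simp add: cinner_minus_left)

lemma cinner_diff_right: "cinner y (x - z::'a::complex_inner) = cinner y x - cinner y z"
  using cinner_add_right[of y x "- z"] by (simp add: cinner_minus_right)

lemma cinner_sum_left: "cinner (\<Sum>i\<in>F. f i) (y::'a::complex_inner) = (\<Sum>i\<in>F. cinner (f i) y)"
  by (induction F rule: infinite_finite_induct) (auto simp: cinner_add_left)

lemma cinner_sum_right: "cinner y (\<Sum>i\<in>F. f i) = (\<Sum>i\<in>F. cinner (y::'a::complex_inner) (f i))"
  by (induction F rule: infinite_finite_induct) (auto simp: cinner_add_right)

lemma cinner_self_eq: "cinner x x = complex_of_real ((norm (x::'a::complex_inner))^2)"
  using cinner_self_real[of x] cinner_self_nonneg[of x] norm_eq_sqrt_cinner[of x]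
  by (simp add: complex_eq_iff)

lemma cinner_real_scale_left: "cinner (r *\<^sub>R x) y = r *\<^sub>R cinner (x::'a::complex_inner) y"
  by (simp add: scaleR_scaleC cinner_scaleC_left scaleR_conv_of_real)

lemma cauchy_schwarz: "cmod (cinner x y) \<le> norm x * norm (y::'a::complex_inner)"
proof (cases "y = 0")
  case True then show ?thesis by simp
next
  case False
  define a where "a = cinner x y"
  define R where "R = (norm y)^2"
  have R: "R > 0" using False by (simp add: R_def)
  define t where "t = a / complex_of_real R"
  have "0 \<le> Re (cinner (x - t *\<^sub>C y) (x - t *\<^sub>C y))" by (rule cinner_self_nonneg)
  also have "cinner (x - t *\<^sub>C y) (x - t *\<^sub>C y) = cinner x x - cnj t * a - t * cnj a + t * cnj t * complex_of_real R"
    unfolding cinner_diff_left cinner_diff_right cinner_scaleC_left cinner_scaleC_right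
    by (simp add: a_def R_def cinner_self_eq[of y] algebra_simps cinner_commute[of y x])
  also have "\<dots> = complex_of_real ((norm x)^2 - (cmod a)^2 / R)"
  proof -
    have na: "a * cnj a = complex_of_real ((cmod a)^2)" using complex_norm_square[of a] by simp
    have "cnj t * a = complex_of_real ((cmod a)^2 / R)" using R by (simp add: t_def mult.commute na)
    moreover have "t * cnj a = complex_of_real ((cmod a)^2 / R)" using R by (simp add: t_def na)
    moreover have "t * cnj t * complex_of_real R = complex_of_real ((cmod a)^2 / R)"
      using R by (simp add: t_def na)
    ultimately show ?thesis by (simp add: cinner_self_eq)
  qed
  finally have "(cmod a)^2 \<le> (norm x)^2 * (norm y)^2" using R by (simp add: R_def field_simps)
  then have "(cmod a)^2 \<le> (norm x * norm y)^2" by (simp add: power_mult_distrib)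
  then show ?thesis unfolding a_def by (rule power2_le_imp_le) simp
qed

lemma bounded_linear_cinner_left: "bounded_linear (\<lambda>z. cinner z (y::'a::complex_inner))"
proof (rule bounded_linear_intro[where K="norm y"])
  show "cinner (x + z) y = cinner x y + cinner z y" for x z by (rule cinner_add_left)
  show "cinner (r *\<^sub>R x) y = r *\<^sub>R cinner x y" for r x by (rule cinner_real_scale_left)
  show "norm (cinner x y) \<le> norm x * norm y" for x by (rule cauchy_schwarz)
qed

lemma continuous_cinner_left: "continuous_on A (\<lambda>z. cinner z (y::'a::complex_inner))"
  by (rule linear_continuous_on[OF bounded_linear_cinner_left])

lemma continuous_cinner_right: "continuous_on A (\<lambda>z. cinner (y::'a::complex_inner) z)"
proof -
  have "continuous_on A (\<lambda>z. cnj (cinner z y))"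
    by (intro continuous_on_cnj continuous_cinner_left)
  then show ?thesis by (subst (asm) cinner_commute[symmetric]) simp
qed

lemma closed_orth: "closed {z. cinner (y::'a::complex_inner) z = 0}"
  using continuous_closed_preimage_constant[OF continuous_cinner_right[of UNIV y], of 0] by simp

lemma closed_orth_left: "closed {z. cinner z (y::'a::complex_inner) = 0}"
  using continuous_closed_preimage_constant[OF continuous_cinner_left[of UNIV y], of 0] by simp


lemma cinner_ext: "(\<And>z. cinner z a = cinner z b) \<Longrightarrow> a = (b::'a::complex_inner)"
proof -
  assume h: "\<And>z. cinner z a = cinner z b"
  have "cinner (a - b) (a - b) = 0" using h[of "a - b"] by (simp add: cinner_diff_right)
  then show ?thesis by (simp add: cinner_self_eq_zero)
qed

lemma clinear_add: "clinear T \<Longrightarrow> T (x + y) = T x + T y" by (simp add: clinear_def)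
lemma clinear_scaleC: "clinear T \<Longrightarrow> T (c *\<^sub>C x) = c *\<^sub>C T x" by (simp add: clinear_def)
lemma clinear_zero: "clinear T \<Longrightarrow> T 0 = 0"
  by (metis add_cancel_right_right add_0 clinear_add)
lemma clinear_minus: "clinear T \<Longrightarrow> T (- x) = - T x"
  by (metis add_eq_0_iff clinear_add clinear_zero)
lemma clinear_diff: "clinear T \<Longrightarrow> T (x - y) = T x - T y"
  using clinear_add[of T x "- y"] by (simp add: clinear_minus)
lemma clinear_sum: "clinear T \<Longrightarrow> T (\<Sum>i\<in>F. f i) = (\<Sum>i\<in>F. T (f i))"
  by (induction F rule: infinite_finite_induct) (auto simp: clinear_add clinear_zero)

lemma adjoint_clinear:
  fixes T :: "'a::complex_inner \<Rightarrow> 'a"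
  assumes "is_adjoint T Ts" shows "clinear Ts"
  unfolding clinear_def
proof safe
  fix x y show "Ts (x + y) = Ts x + Ts y"
    by (rule cinner_ext) (metis assms is_adjoint_def cinner_add_right)
next
  fix c x show "Ts (c *\<^sub>C x) = c *\<^sub>C Ts x"
    by (rule cinner_ext) (metis assms is_adjoint_def cinner_scaleC_right)
qed

lemma isometry_clinear: "isometry V \<Longrightarrow> clinear V"
  by (simp add: isometry_def bounded_clinear_def)

lemma polarization_zero:
  fixes T :: "'a::complex_inner \<Rightarrow> 'a"
  assumes T: "clinear T" and h: "\<And>x. cinner x (T x) = 0"
  shows "T y = 0"
proof -
  have s: "cinner x (T y) + cinner y (T x) = 0" for x y
    using h[of "x + y"] h[of x] h[of y] by (simp add: clinear_add[OF T] cinner_add_left cinner_add_right add_ac)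
  have "cinner x (T (\<i> *\<^sub>C y)) + cinner (\<i> *\<^sub>C y) (T x) = 0" for x
    by (rule s)
  then have d: "- \<i> * cinner x (T y) + \<i> * cinner y (T x) = 0" for x
    by (simp add: clinear_scaleC[OF T] cinner_scaleC_right cinner_scaleC_left)
  have "cinner x (T y) = 0" for x
  proof -
    have "\<i> * (cinner x (T y) + cinner y (T x)) = 0" using s by simp
    with d[of x] have "2 * \<i> * cinner x (T y) = 0" by (simp add: algebra_simps)
    then show ?thesis by simp
  qed
  from this[of "T y"] show ?thesis by (simp add: cinner_self_eq_zero)
qed

lemma isometry_adj_left:
  fixes V :: "'a::complex_inner \<Rightarrow> 'a"
  assumes iso: "isometry V" and adj: "is_adjoint V Vs"
  shows "Vs (V x) = x"
proof -
  let ?T = "\<lambda>x. Vs (V x) - x"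
  have lin: "clinear ?T"
    using adjoint_clinear[OF adj] isometry_clinear[OF iso]
    unfolding clinear_def by (simp add: algebra_simps cvs.scale_right_diff_distrib)
  have "cinner x (?T x) = 0" for x
  proof -
    have "cinner x (Vs (V x)) = cinner (V x) (V x)" using adj by (simp add: is_adjoint_def)
    also have "\<dots> = cinner x x" using iso by (simp add: isometry_def cinner_self_eq)
    finally show ?thesis by (simp add: cinner_diff_right)
  qed
  from polarization_zero[OF lin this] show ?thesis by simp
qed

lemma isometry_cinner:
  fixes V :: "'a::complex_inner \<Rightarrow> 'a"
  assumes iso: "isometry V" and adj: "is_adjoint V Vs"
  shows "cinner (V x) (V y) = cinner x y"
  using adj isometry_adj_left[OF iso adj] by (simp add: is_adjoint_def)

lemma pythag:
  fixes a b :: "'a::complex_inner"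
  assumes "cinner a b = 0"
  shows "(norm (a + b))^2 = (norm a)^2 + (norm b)^2"
proof -
  have "cinner b a = 0" using assms by (metis cinner_commute complex_cnj_zero)
  then have "cinner (a + b) (a + b) = cinner a a + cinner b b"
    using assms by (simp add: cinner_add_left cinner_add_right)
  then have "complex_of_real ((norm (a + b))^2) = complex_of_real ((norm a)^2 + (norm b)^2)"
    unfolding cinner_self_eq of_real_add .
  then show ?thesis by (simp only: of_real_eq_iff)
qed


definition orthonormal :: "'a::complex_inner set \<Rightarrow> bool" where
  "orthonormal B \<longleftrightarrow> (\<forall>x\<in>B. cinner x x = 1) \<and> (\<forall>x\<in>B. \<forall>y\<in>B. x \<noteq> y \<longrightarrow> cinner x y = 0)"

lemma cspan_eq: "cspan B = cvs.span B"
  unfolding cspan_def cvs.span_explicit by blast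

lemma is_onb_alt: "is_onb S B \<longleftrightarrow> B \<subseteq> S \<and> orthonormal B \<and> closure (cvs.span B) = S"
  unfolding is_onb_def orthonormal_def cspan_eq by (simp only: conj_assoc)

lemma cinner_sum_onb:
  assumes "orthonormal B" "finite t" "t \<subseteq> B" "v \<in> t"
  shows "cinner (\<Sum>w\<in>t. u w *\<^sub>C w) v = u v"
proof -
  have "cinner (\<Sum>w\<in>t. u w *\<^sub>C w) v = (\<Sum>w\<in>t. u w * cinner w v)"
    by (simp add: cinner_sum_left cinner_scaleC_left)
  also have "\<dots> = (\<Sum>w\<in>t. if w = v then u w else 0)"
    using assms unfolding orthonormal_def by (intro sum.cong) auto
  also have "\<dots> = u v" using assms by simp
  finally show ?thesis .
qed

lemma orthonormal_independent:
  assumes "orthonormal B" shows "cvs.independent B"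
  unfolding cvs.dependent_explicit
proof (intro notI, elim exE conjE bexE)
  fix t u v assume "finite t" "t \<subseteq> B" "(\<Sum>v\<in>t. u v *\<^sub>C v) = 0" "v \<in> t" "u v \<noteq> 0"
  with cinner_sum_onb[OF assms, of t v u] show False by simp
qed

lemma subspace_orth_left: "cvs.subspace {z. cinner z (y::'a::complex_inner) = 0}"
  unfolding cvs.subspace_def by (simp add: cinner_add_left cinner_scaleC_left)

lemma subspace_orth_right: "cvs.subspace {z. cinner (y::'a::complex_inner) z = 0}"
  unfolding cvs.subspace_def by (simp add: cinner_add_right cinner_scaleC_right)

lemma orth_span:
  assumes "\<And>b. b \<in> B \<Longrightarrow> cinner b y = 0" "z \<in> closure (cvs.span B)"
  shows "cinner z (y::'a::complex_inner) = 0"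
proof -
  have "cvs.span B \<subseteq> {z. cinner z y = 0}"
    using assms(1) by (intro cvs.span_minimal subspace_orth_left) auto
  then have "closure (cvs.span B) \<subseteq> {z. cinner z y = 0}"
    by (intro closure_minimal closed_orth_left)
  with assms(2) show ?thesis by auto
qed

lemma finite_onb_closed:
  assumes on: "orthonormal B" and fin: "finite B"
  shows "closure (cvs.span B) = cvs.span B"
proof
  show "cvs.span B \<subseteq> closure (cvs.span B)" by (rule closure_subset)
next
  show "closure (cvs.span B) \<subseteq> cvs.span B"
  proof
    fix x assume x: "x \<in> closure (cvs.span B)"
    define s where "s = (\<Sum>b\<in>B. cinner x b *\<^sub>C b)"
    define y where "y = x - s"
    have s_sp: "s \<in> cvs.span B" unfolding s_def
      by (intro cvs.span_sum cvs.span_scale cvs.span_base)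
    have "cinner y b = 0" if b: "b \<in> B" for b
    proof -
      have "cinner s b = cinner x b" unfolding s_def using cinner_sum_onb[OF on fin order.refl b] by simp
      then show ?thesis by (simp add: y_def cinner_diff_left)
    qed
    then have yb: "cinner b y = 0" if "b \<in> B" for b using that by (metis cinner_commute complex_cnj_zero)
    have "cinner x y = 0" by (rule orth_span[OF yb x])
    moreover have "s \<in> closure (cvs.span B)" using s_sp closure_subset[of "cvs.span B"] by blast
    then have "cinner s y = 0" using orth_span[of B y s] yb by blast
    ultimately have "cinner y y = 0" by (simp add: y_def cinner_diff_left)
    then have "x = s" by (simp add: y_def cinner_self_eq_zero)
    with s_sp show "x \<in> cvs.span B" by simp
  qed
qed


definition gs_step :: "'a::complex_inner \<Rightarrow> 'a set \<Rightarrow> 'a set" where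
  "gs_step p E = (let r = p - (\<Sum>e\<in>E. cinner p e *\<^sub>C e) in
     if r = 0 then E else insert (complex_of_real (1 / norm r) *\<^sub>C r) E)"

primrec gs :: "(nat \<Rightarrow> 'a::complex_inner) \<Rightarrow> nat \<Rightarrow> 'a set" where
  "gs p 0 = {}"
| "gs p (Suc n) = gs_step (p n) (gs p n)"

lemma gs_step_props:
  fixes p :: "'a::complex_inner"
  assumes fin: "finite E" and on: "orthonormal E"
  shows "finite (gs_step p E) \<and> orthonormal (gs_step p E) \<and> E \<subseteq> gs_step p E
    \<and> p \<in> cvs.span (gs_step p E) \<and> gs_step p E \<subseteq> cvs.span (insert p E)"
proof -
  define s where "s = (\<Sum>e\<in>E. cinner p e *\<^sub>C e)"
  define r where "r = p - s"
  have s_sp: "s \<in> cvs.span E" unfolding s_def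
    by (intro cvs.span_sum cvs.span_scale cvs.span_base)
  have rE: "cinner r e = 0" if "e \<in> E" for e
  proof -
    have "cinner s e = cinner p e" unfolding s_def using cinner_sum_onb[OF on fin order.refl that] by simp
    then show ?thesis by (simp add: r_def cinner_diff_left)
  qed
  show ?thesis
  proof (cases "r = 0")
    case True
    then have "gs_step p E = E" by (simp add: gs_step_def Let_def s_def[symmetric] r_def[symmetric])
    moreover have "p = s" using True r_def by simp
    ultimately show ?thesis using fin on s_sp cvs.span_superset[of "insert p E"] by auto
  next
    case False
    define u where "u = complex_of_real (1 / norm r) *\<^sub>C r"
    have gs: "gs_step p E = insert u E"
      using False by (simp add: gs_step_def Let_def s_def[symmetric] r_def[symmetric] u_def)
    have nr: "norm r > 0" using False by simp
    have "cinner u u = complex_of_real (1 / norm r) * cnj (complex_of_real (1 / norm r)) * cinner r r"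
      by (simp add: u_def cinner_scaleC_left cinner_scaleC_right)
    also have "\<dots> = complex_of_real (1 / norm r) * complex_of_real (1 / norm r) * complex_of_real (norm r * norm r)"
      by (simp only: cinner_self_eq[of r] complex_cnj_complex_of_real power2_eq_square)
    also have "\<dots> = 1" using nr by (simp flip: of_real_mult)
    finally have uu: "cinner u u = 1" .
    have ue: "cinner u e = 0" if "e \<in> E" for e
      using rE[OF that] by (simp add: u_def cinner_scaleC_left)
    have eu: "cinner e u = 0" if "e \<in> E" for e
      using ue[OF that] by (metis cinner_commute complex_cnj_zero)
    have uE: "u \<notin> E" using uu ue by force
    have on': "orthonormal (insert u E)"
      using on uu ue eu unfolding orthonormal_def by auto
    have "p = s + complex_of_real (norm r) *\<^sub>C u"
      using nr by (simp add: u_def scaleC_scaleC scaleC_one r_def)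
    moreover have "s + complex_of_real (norm r) *\<^sub>C u \<in> cvs.span (insert u E)"
      using s_sp cvs.span_mono[of E "insert u E"]
      by (intro cvs.span_add cvs.span_scale) (auto intro: cvs.span_base)
    ultimately have "p \<in> cvs.span (insert u E)" by simp
    moreover have "u \<in> cvs.span (insert p E)"
    proof -
      have "s \<in> cvs.span (insert p E)" using s_sp cvs.span_mono[of E "insert p E"] by auto
      then have "r \<in> cvs.span (insert p E)" unfolding r_def
        by (intro cvs.span_diff) (auto intro: cvs.span_base)
      then show ?thesis unfolding u_def by (rule cvs.span_scale)
    qed
    ultimately show ?thesis using gs fin on' cvs.span_superset[of "insert p E"] by auto
  qed
qed

lemma gs_props:
  "finite (gs p n) \<and> orthonormal (gs p n) \<and> (\<forall>k<n. p k \<in> cvs.span (gs p n))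
    \<and> gs p n \<subseteq> cvs.span (range p)"
proof (induction n)
  case 0 then show ?case by (simp add: orthonormal_def)
next
  case (Suc n)
  then have fin: "finite (gs p n)" and on: "orthonormal (gs p n)" by auto
  note st = gs_step_props[OF fin on, of "p n"]
  have "\<forall>k<Suc n. p k \<in> cvs.span (gs p (Suc n))"
  proof safe
    fix k assume "k < Suc n"
    then consider "k < n" | "k = n" by linarith
    then show "p k \<in> cvs.span (gs p (Suc n))"
    proof cases
      case 1 then show ?thesis using Suc.IH st cvs.span_mono[of "gs p n" "gs p (Suc n)"] by auto
    next
      case 2 then show ?thesis using st by simp
    qed
  qed
  moreover have "gs p (Suc n) \<subseteq> cvs.span (range p)"
  proof -
    have "insert (p n) (gs p n) \<subseteq> cvs.span (range p)"
      using Suc.IH cvs.span_base[of "p n" "range p"] by auto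
    then have "cvs.span (insert (p n) (gs p n)) \<subseteq> cvs.span (range p)"
      by (metis cvs.span_minimal cvs.subspace_span)
    then show ?thesis using st by auto
  qed
  ultimately show ?case using st by simp
qed

lemma gs_mono: "m \<le> n \<Longrightarrow> gs p m \<subseteq> gs p n"
proof (induction n)
  case 0 then show ?case by simp
next
  case (Suc n)
  have "gs p n \<subseteq> gs p (Suc n)" using gs_step_props[of "gs p n" "p n"] gs_props[of p n] by simp
  with Suc show ?case by (cases "m = Suc n") auto
qed

lemma onb_exists:
  fixes S :: "'a::complex_inner set" and p :: "nat \<Rightarrow> 'a"
  assumes sub: "cvs.subspace S" and cl: "closed S"
    and pS: "range p \<subseteq> S" and dense: "S \<subseteq> closure (range p)"
  shows "\<exists>B. is_onb S B \<and> countable B"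
proof -
  define B where "B = (\<Union>n. gs p n)"
  have cnt: "countable B" unfolding B_def using gs_props by (intro countable_UN) (auto intro: countable_finite)
  have on: "orthonormal B"
    unfolding orthonormal_def
  proof safe
    fix x assume "x \<in> B"
    then obtain n where "x \<in> gs p n" by (auto simp: B_def)
    then show "cinner x x = 1" using gs_props[of p n] by (auto simp: orthonormal_def)
  next
    fix x y assume "x \<in> B" "y \<in> B" "x \<noteq> y"
    then obtain m n where "x \<in> gs p m" "y \<in> gs p n" by (auto simp: B_def)
    then have "x \<in> gs p (max m n)" "y \<in> gs p (max m n)" using gs_mono[of m "max m n" p] gs_mono[of n "max m n" p] by auto
    then show "cinner x y = 0" using gs_props[of p "max m n"] \<open>x \<noteq> y\<close> by (auto simp: orthonormal_def)
  qed
  have spS: "cvs.span (range p) \<subseteq> S" using cvs.span_minimal[OF pS sub] .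
  have BS: "B \<subseteq> S" unfolding B_def using gs_props[of p] spS by blast
  have "closure (cvs.span B) \<subseteq> S"
    using cvs.span_minimal[OF BS sub] cl by (intro closure_minimal)
  moreover have "range p \<subseteq> cvs.span B"
  proof safe
    fix k
    have "p k \<in> cvs.span (gs p (Suc k))" using gs_props[of p "Suc k"] by simp
    moreover have "gs p (Suc k) \<subseteq> B" unfolding B_def by blast
    ultimately show "p k \<in> cvs.span B" using cvs.span_mono by blast
  qed
  then have "S \<subseteq> closure (cvs.span B)" using dense closure_mono by blast
  ultimately show ?thesis using BS on cnt unfolding is_onb_alt by blast
qed


lemma ker_adj_onb:
  fixes V Vs :: "'a::complex_inner \<Rightarrow> 'a"
  assumes sep: "separable_space TYPE('a)" and iso: "isometry V" and adj: "is_adjoint V Vs"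
  shows "\<exists>B. is_onb (ker Vs) B \<and> countable B"
proof -
  have linV: "clinear V" by (rule isometry_clinear[OF iso])
  have linVs: "clinear Vs" by (rule adjoint_clinear[OF adj])
  have VsV: "Vs (V x) = x" for x by (rule isometry_adj_left[OF iso adj])
  have sub: "cvs.subspace (ker Vs)"
    unfolding cvs.subspace_def ker_def using linVs by (simp add: clinear_zero clinear_add clinear_scaleC)
  have kerI: "ker Vs = (\<Inter>z. {x. cinner (V z) x = 0})"
  proof safe
    fix x z assume "x \<in> ker Vs" then show "cinner (V z) x = 0" using adj by (simp add: is_adjoint_def ker_def)
  next
    fix x assume "x \<in> (\<Inter>z. {x. cinner (V z) x = 0})"
    then have "cinner z (Vs x) = cinner z 0" for z using adj by (simp add: is_adjoint_def)
    then show "x \<in> ker Vs" unfolding ker_def by (simp add: cinner_ext)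
  qed
  have cl: "closed (ker Vs)" unfolding kerI by (intro closed_INT ballI closed_orth)
  obtain D :: "'a set" where D: "countable D" "closure D = UNIV"
    using sep unfolding separable_space_def by blast
  have Dne: "D \<noteq> {}" using D by auto
  define d where "d = from_nat_into D"
  have rd: "range d = D" unfolding d_def using range_from_nat_into[OF Dne D(1)] .
  define P where "P x = x - V (Vs x)" for x
  have PS: "Vs (P x) = 0" for x unfolding P_def by (simp add: clinear_diff[OF linVs] VsV)
  have Plin: "P (x - y) = P x - P y" for x y unfolding P_def by (simp add: clinear_diff[OF linVs] clinear_diff[OF linV])
  have Pnorm: "norm (P w) \<le> norm w" for w
  proof -
    have "cinner (P w) (V (Vs w)) = 0"
      using adj PS[of w] unfolding is_adjoint_def by (metis cinner_commute cinner_zero_right complex_cnj_zero)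
    from pythag[OF this] have "(norm w)^2 = (norm (P w))^2 + (norm (V (Vs w)))^2" by (simp add: P_def)
    then have "(norm (P w))^2 \<le> (norm w)^2" by simp
    then show ?thesis by (rule power2_le_imp_le) simp
  qed
  define p where "p = P \<circ> d"
  have pS: "range p \<subseteq> ker Vs" unfolding p_def ker_def using PS by auto
  have dense: "ker Vs \<subseteq> closure (range p)"
  proof
    fix x assume x: "x \<in> ker Vs"
    then have Px: "P x = x" by (simp add: P_def ker_def linV clinear_zero)
    show "x \<in> closure (range p)" unfolding closure_approachable
    proof safe
      fix e :: real assume e: "e > 0"
      have "x \<in> closure D" using D by simp
      then obtain y where y: "y \<in> D" "dist y x < e" using e unfolding closure_approachable by blast
      then obtain n where n: "y = d n" using rd by auto
      have "dist (p n) x = norm (P (y - x))" by (simp add: p_def n dist_norm Plin Px)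
      also have "\<dots> \<le> norm (y - x)" by (rule Pnorm)
      finally have "dist (p n) x < e" using y by (simp add: dist_norm)
      then show "\<exists>z\<in>range p. dist z x < e" by blast
    qed
  qed
  show ?thesis by (rule onb_exists[OF sub cl pS dense])
qed


lemma inj_card_le:
  fixes T :: "'a::complex_inner \<Rightarrow> 'a"
  assumes on: "orthonormal F" and finF: "finite F" and sub: "cvs.subspace S1" and FS: "F \<subseteq> S1"
    and T: "clinear T" and inj: "\<And>x. x \<in> S1 \<Longrightarrow> T x = 0 \<Longrightarrow> x = 0"
    and TG: "T ` S1 \<subseteq> cvs.span G" and finG: "finite G"
  shows "card F \<le> card G"
proof -
  have injS: "inj_on T S1"
  proof (rule inj_onI)
    fix x y assume "x \<in> S1" "y \<in> S1" "T x = T y"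
    then have "x - y \<in> S1" "T (x - y) = 0" using sub cvs.subspace_diff by (auto simp: clinear_diff[OF T])
    then have "x - y = 0" using inj by blast
    then show "x = y" by simp
  qed
  then have injF: "inj_on T F" using FS inj_on_subset by blast
  have spF: "cvs.span F \<subseteq> S1" using cvs.span_minimal[OF FS sub] .
  have ind: "cvs.independent (T ` F)"
    unfolding cvs.dependent_explicit
  proof (intro notI, elim exE conjE bexE)
    fix t u v assume t: "finite t" "t \<subseteq> T ` F" "(\<Sum>v\<in>t. u v *\<^sub>C v) = 0" "v \<in> t" "u v \<noteq> 0"
    obtain t' where t': "t' \<subseteq> F" "t = T ` t'" using t(2) subset_imageE by blast
    have fint': "finite t'" using t' finF finite_subset by blast
    have injt': "inj_on T t'" using injF t' inj_on_subset by blast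
    define z where "z = (\<Sum>w\<in>t'. u (T w) *\<^sub>C w)"
    have "T z = (\<Sum>w\<in>t'. u (T w) *\<^sub>C T w)" unfolding z_def by (simp add: clinear_sum[OF T] clinear_scaleC[OF T])
    also have "\<dots> = (\<Sum>v\<in>t. u v *\<^sub>C v)" unfolding t'(2) by (simp add: sum.reindex[OF injt'])
    finally have Tz: "T z = 0" using t by simp
    have "z \<in> cvs.span F" unfolding z_def using t'(1)
      by (intro cvs.span_sum cvs.span_scale) (auto intro: cvs.span_base)
    then have "z = 0" using Tz inj spF by blast
    obtain w where w: "w \<in> t'" "v = T w" using t(4) t'(2) by blast
    have "cinner z w = u (T w)" unfolding z_def by (rule cinner_sum_onb[OF on fint' t'(1) w(1)])
    with \<open>z = 0\<close> w t(5) show False by simp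
  qed
  have "T ` F \<subseteq> cvs.span G" using TG FS by blast
  from cvs.independent_span_bound[OF finG ind this] have "card (T ` F) \<le> card G" by simp
  then show ?thesis using card_image[OF injF] by simp
qed



lemma clinear_span_image:
  fixes T :: "'a::complex_inner \<Rightarrow> 'a"
  assumes T: "clinear T"
  shows "T ` cvs.span X \<subseteq> cvs.span (T ` X)"
proof -
  have "cvs.subspace {y. T y \<in> cvs.span (T ` X)}"
    unfolding cvs.subspace_def using T
    by (simp add: clinear_zero clinear_add clinear_scaleC cvs.span_zero cvs.span_add cvs.span_scale)
  moreover have "X \<subseteq> {y. T y \<in> cvs.span (T ` X)}" by (auto intro: cvs.span_base)
  ultimately have "cvs.span X \<subseteq> {y. T y \<in> cvs.span (T ` X)}" by (rule cvs.span_minimal[rotated])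
  then show ?thesis by (auto simp: image_subset_iff)
qed


lemma orthonormal_subset: "orthonormal G \<Longrightarrow> F \<subseteq> G \<Longrightarrow> orthonormal F"
  unfolding orthonormal_def subset_eq by simp

theorem proposition3p8:
  fixes V1 V2 V1s V2s Ws :: "'a::{complex_inner, complete_space} \<Rightarrow> 'a"
  assumes sep: "separable_space TYPE('a)"
    and iso1: "isometry V1" and iso2: "isometry V2"
    and comm: "V1 \<circ> V2 = V2 \<circ> V1"
    and adj1: "is_adjoint V1 V1s" and adj2: "is_adjoint V2 V2s"
    and adjW: "is_adjoint (V1 \<circ> V2) Ws"
    and hyp: "orth_compl (ker (defect_op V1 V1s V2 V2s)) = ker Ws"
  shows "same_hilbert_dim (ker V1s) (ker V2s)
     \<and> (finite_dim (ker Ws) \<longrightarrow> (\<forall>B. is_onb (ker Ws) B \<and> finite B \<longrightarrow> even (card B)))"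
proof -
  have l1: "clinear V1" by (rule isometry_clinear[OF iso1])
  have l2: "clinear V2" by (rule isometry_clinear[OF iso2])
  have l1s: "clinear V1s" by (rule adjoint_clinear[OF adj1])
  have l2s: "clinear V2s" by (rule adjoint_clinear[OF adj2])
  have i1: "V1s (V1 x) = x" for x by (rule isometry_adj_left[OF iso1 adj1])
  have i2: "V2s (V2 x) = x" for x by (rule isometry_adj_left[OF iso2 adj2])
  have c12: "V1 (V2 x) = V2 (V1 x)" for x using fun_cong[OF comm, of x] by simp
  have Wsf: "Ws x = V2s (V1s x)" for x
  proof (rule cinner_ext)
    fix z
    have "cinner z (Ws x) = cinner (V1 (V2 z)) x" using adjW by (simp add: is_adjoint_def)
    also have "\<dots> = cinner (V2 z) (V1s x)" using adj1 by (simp add: is_adjoint_def)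
    also have "\<dots> = cinner z (V2s (V1s x))" using adj2 by (simp add: is_adjoint_def)
    finally show "cinner z (Ws x) = cinner z (V2s (V1s x))" .
  qed
  have sc: "V1s (V2s x) = V2s (V1s x)" for x
  proof (rule cinner_ext)
    fix z
    have "cinner z (V1s (V2s x)) = cinner (V1 z) (V2s x)" using adj1 by (simp add: is_adjoint_def)
    also have "\<dots> = cinner (V2 (V1 z)) x" using adj2 by (simp add: is_adjoint_def)
    also have "\<dots> = cinner (V1 (V2 z)) x" by (simp add: c12)
    also have "\<dots> = cinner z (Ws x)" using adjW by (simp add: is_adjoint_def)
    finally show "cinner z (V1s (V2s x)) = cinner z (V2s (V1s x))" by (simp add: Wsf)
  qed
  have key: "x = 0" if "defect_op V1 V1s V2 V2s x = 0" "Ws x = 0" for x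
  proof -
    have "x \<in> orth_compl (ker (defect_op V1 V1s V2 V2s))" using hyp that(2) by (simp add: ker_def)
    moreover have "x \<in> ker (defect_op V1 V1s V2 V2s)" using that(1) by (simp add: ker_def)
    ultimately have "cinner x x = 0" unfolding orth_compl_def by blast
    then show ?thesis by (simp add: cinner_self_eq_zero)
  qed
  have sub1: "cvs.subspace (ker V1s)"
    unfolding cvs.subspace_def ker_def using l1s by (simp add: clinear_zero clinear_add clinear_scaleC)
  have sub2: "cvs.subspace (ker V2s)"
    unfolding cvs.subspace_def ker_def using l2s by (simp add: clinear_zero clinear_add clinear_scaleC)
  define A where "A x = x - V2 (V2s x)" for x
  define Bm where "Bm x = x - V1 (V1s x)" for x
  have lA: "clinear A" using l2 l2s unfolding A_def clinear_def
    by (simp add: algebra_simps cvs.scale_right_diff_distrib)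
  have lB: "clinear Bm" using l1 l1s unfolding Bm_def clinear_def
    by (simp add: algebra_simps cvs.scale_right_diff_distrib)
  have A2: "A ` ker V1s \<subseteq> ker V2s" by (auto simp: ker_def A_def clinear_diff[OF l2s] i2)
  have B1: "Bm ` ker V2s \<subseteq> ker V1s" by (auto simp: ker_def Bm_def clinear_diff[OF l1s] i1)
  have Ainj: "x = 0" if "x \<in> ker V1s" "A x = 0" for x
  proof -
    have x1: "V1s x = 0" using that by (simp add: ker_def)
    have xe: "x = V2 (V2s x)" using that(2) by (simp add: A_def)
    have "V1s (V2s x) = 0" by (simp add: sc x1 clinear_zero[OF l2s])
    then have "defect_op V1 V1s V2 V2s x = 0"
      unfolding defect_op_def using x1 xe by (simp add: clinear_zero[OF l1] clinear_zero[OF l2])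
    moreover have "Ws x = 0" by (simp add: Wsf x1 clinear_zero[OF l2s])
    ultimately show ?thesis by (rule key)
  qed
  have Binj: "x = 0" if "x \<in> ker V2s" "Bm x = 0" for x
  proof -
    have x2: "V2s x = 0" using that by (simp add: ker_def)
    have xe: "x = V1 (V1s x)" using that(2) by (simp add: Bm_def)
    have "defect_op V1 V1s V2 V2s x = 0"
      unfolding defect_op_def using x2 xe by (simp add: clinear_zero[OF l1] clinear_zero[OF l2] clinear_zero[OF l1s])
    moreover have "Ws x = 0" by (simp add: Wsf sc[symmetric] x2 clinear_zero[OF l1s])
    ultimately show ?thesis by (rule key)
  qed
  obtain B1 where ob1: "is_onb (ker V1s) B1" "countable B1" using ker_adj_onb[OF sep iso1 adj1] by blast
  obtain B2 where ob2: "is_onb (ker V2s) B2" "countable B2" using ker_adj_onb[OF sep iso2 adj2] by blast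
  have on1: "orthonormal B1" "B1 \<subseteq> ker V1s" "closure (cvs.span B1) = ker V1s" using ob1(1) unfolding is_onb_alt by blast+
  have on2: "orthonormal B2" "B2 \<subseteq> ker V2s" "closure (cvs.span B2) = ker V2s" using ob2(1) unfolding is_onb_alt by blast+
  note orth_sub = orthonormal_subset
  have fin12: "finite B1 \<and> card B1 \<le> card B2" if f2: "finite B2"
  proof -
    have W2: "ker V2s = cvs.span B2" using on2 finite_onb_closed[OF on2(1) f2] by simp
    have AW: "A ` ker V1s \<subseteq> cvs.span B2" using A2 W2 by simp
    have bnd: "card F \<le> card B2" if "F \<subseteq> B1" "finite F" for F
      by (rule inj_card_le[OF orth_sub[OF on1(1) that(1)] that(2) sub1 subset_trans[OF that(1) on1(2)] lA Ainj AW f2])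
    have "finite B1"
    proof (rule ccontr)
      assume "infinite B1"
      then obtain F where F: "F \<subseteq> B1" "finite F" "card F = Suc (card B2)"
        using infinite_arbitrarily_large by blast
      from bnd[OF F(1) F(2)] F(3) show False by simp
    qed
    then show ?thesis using bnd[OF order.refl] by simp
  qed
  have fin21: "finite B2 \<and> card B2 \<le> card B1" if f1: "finite B1"
  proof -
    have W1: "ker V1s = cvs.span B1" using on1 finite_onb_closed[OF on1(1) f1] by simp
    have BW: "Bm ` ker V2s \<subseteq> cvs.span B1" using B1 W1 by simp
    have bnd: "card F \<le> card B1" if "F \<subseteq> B2" "finite F" for F
      by (rule inj_card_le[OF orth_sub[OF on2(1) that(1)] that(2) sub2 subset_trans[OF that(1) on2(2)] lB Binj BW f1])
    have "finite B2"
    proof (rule ccontr)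
      assume "infinite B2"
      then obtain F where F: "F \<subseteq> B2" "finite F" "card F = Suc (card B1)"
        using infinite_arbitrarily_large by blast
      from bnd[OF F(1) F(2)] F(3) show False by simp
    qed
    then show ?thesis using bnd[OF order.refl] by simp
  qed
  have part1: "same_hilbert_dim (ker V1s) (ker V2s)"
  proof (cases "finite B1")
    case True
    with fin21 fin12 have "finite B2" "card B1 = card B2" by auto
    then obtain f where "bij_betw f B1 B2" using True finite_same_card_bij by blast
    then show ?thesis unfolding same_hilbert_dim_def using ob1 ob2 by blast
  next
    case False
    then have "infinite B2" using fin12 by blast
    obtain e1 :: "'a \<Rightarrow> nat" where e1: "bij_betw e1 B1 UNIV" using countableE_infinite[OF ob1(2) False] by blast
    obtain e2 :: "'a \<Rightarrow> nat" where e2: "bij_betw e2 B2 UNIV" using countableE_infinite[OF ob2(2) \<open>infinite B2\<close>] by blast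
    have "bij_betw (inv_into B2 e2 \<circ> e1) B1 B2" using e1 bij_betw_inv_into[OF e2] by (rule bij_betw_trans)
    then show ?thesis unfolding same_hilbert_dim_def using ob1 ob2 by blast
  qed
  have part2: "even (card B)" if B: "is_onb (ker Ws) B" "finite B" for B
  proof -
    have onB: "orthonormal B" "B \<subseteq> ker Ws" "closure (cvs.span B) = ker Ws" using B(1) unfolding is_onb_alt by blast+
    have W: "ker Ws = cvs.span B" using onB finite_onb_closed[OF onB(1) B(2)] by simp
    define C0 where "C0 = B1 \<union> V1 ` B2"
    have injV1: "inj_on V1 X" for X by (metis i1 inj_onI)
    have C0W: "C0 \<subseteq> ker Ws"
      using on1(2) on2(2) by (auto simp: C0_def ker_def Wsf i1 clinear_zero[OF l2s])
    have cr: "cinner x (V1 y) = 0" "cinner (V1 y) x = 0" if "x \<in> B1" for x y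
    proof -
      have "V1s x = 0" using that on1(2) by (auto simp: ker_def)
      then show "cinner (V1 y) x = 0" using adj1 by (simp add: is_adjoint_def)
      then show "cinner x (V1 y) = 0" by (metis cinner_commute complex_cnj_zero)
    qed
    have onC: "orthonormal C0"
      using on1(1) on2(1) cr unfolding orthonormal_def C0_def
      by (auto simp: isometry_cinner[OF iso1 adj1]) metis
    have "C0 \<subseteq> cvs.span B" using C0W W by simp
    from cvs.independent_span_bound[OF B(2) orthonormal_independent[OF onC] this]
    have fC: "finite C0" by simp
    then have f1: "finite B1" by (simp add: C0_def)
    have "finite (V1 ` B2)" using fC by (simp add: C0_def)
    then have f2: "finite B2" by (rule finite_imageD[OF _ injV1])
    have eq: "card B1 = card B2" using fin12[OF f2] fin21[OF f1] by simp
    have W1: "ker V1s = cvs.span B1" using on1 finite_onb_closed[OF on1(1) f1] by simp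
    have W2: "ker V2s = cvs.span B2" using on2 finite_onb_closed[OF on2(1) f2] by simp
    have WC: "ker Ws \<subseteq> cvs.span C0"
    proof
      fix x assume x: "x \<in> ker Ws"
      have "Bm x \<in> ker V1s" by (simp add: ker_def Bm_def clinear_diff[OF l1s] i1)
      then have a: "Bm x \<in> cvs.span C0" using W1 cvs.span_mono[of B1 C0] by (auto simp: C0_def)
      have "V1s x \<in> ker V2s" using x by (simp add: ker_def Wsf)
      then have "V1 (V1s x) \<in> cvs.span (V1 ` B2)" using W2 clinear_span_image[OF l1, of B2] by auto
      then have b: "V1 (V1s x) \<in> cvs.span C0" using cvs.span_mono[of "V1 ` B2" C0] by (auto simp: C0_def)
      have "x = Bm x + V1 (V1s x)" by (simp add: Bm_def)
      then show "x \<in> cvs.span C0" using a b cvs.span_add by metis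
    qed
    have "card B \<le> card C0"
      using cvs.independent_span_bound[OF fC orthonormal_independent[OF onB(1)]] onB(2) WC by auto
    moreover have "card C0 = card B1 + card B2"
    proof -
      have "B1 \<inter> V1 ` B2 = {}"
      proof safe
        fix y assume "V1 y \<in> B1" "y \<in> B2"
        then have "cinner (V1 y) (V1 y) = 0" using cr by blast
        moreover have "cinner (V1 y) (V1 y) = 1" using \<open>V1 y \<in> B1\<close> on1(1) by (auto simp: orthonormal_def)
        ultimately show "V1 y \<in> {}" by simp
      qed
      then have "card C0 = card B1 + card (V1 ` B2)" unfolding C0_def using f1 f2 by (simp add: card_Un_disjoint)
      then show ?thesis using card_image[OF injV1] by simp
    qed
    moreover have "card C0 \<le> card B"
      using cvs.independent_span_bound[OF B(2) orthonormal_independent[OF onC] \<open>C0 \<subseteq> cvs.span B\<close>] by simp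
    ultimately have "card B = card B1 + card B2" by simp
    then show ?thesis using eq by simp
  qed
  show ?thesis using part1 part2 by blast
qed

end
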